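(* Let $\lambda>0$. For every real $z>2$, $$\int_{-2}^{2}\frac{(4-x^2)^{\lambda-1/2}}{(z-x)^{\lambda}}\,dx \;=\; C_\lambda\,\big[G(z)\big]^{\lambda} \;=\; C_\lambda\left[\int_{-2}^{2}\frac{1}{z-x}\,\frac{\sqrt{4-x^2}}{2\pi}\,dx\right]^{\lambda} \;=\; C_\lambda\,\exp\left(-\lambda\int_{-2}^{2}\log(z-x)\,\frac{dx}{\pi\sqrt{4-x^2}}\right),$$ where $C_\lambda=\int_{-2}^{2}(4-x^2)^{\lambda-1/2}\,dx$.
   Context: $G$ denotes the Cauchy–Stieltjes transform of the standard Wigner (semicircle) law: $G(z)=\int_{-2}^2\frac{1}{z-x}\frac{\sqrt{4-x^2}}{2\pi}dx=\frac{z-\sqrt{z^2-4}}{2}$ for $z\in\mathbb{C}\setminus[-2,2]$ (branch with $G(z)\sim 1/z$ at infinity); for real $z>2$, $G(z)\in(0,1)$. Real powers and logarithms of positive reals are the usual real ones. *)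

theory Defs
  imports "HOL-Analysis.Analysis"
begin

text \<open>Closed form of the Cauchy-Stieltjes transform of the semicircle law,
  for real z > 2 (branch with G(z) ~ 1/z at infinity).\<close>
definition G :: "real \<Rightarrow> real" where
  "G z = (z - sqrt (z^2 - 4)) / 2"

definition C :: "real \<Rightarrow> real" where
  "C lam = (LBINT x = -2..2. (4 - x^2) powr (lam - 1/2))"

end

theory Submission
  imports Defs
begin


definition DD :: "real \<Rightarrow> real \<Rightarrow> real" where
  "DD g t = 1 + 2*g*cos t + g^2"

lemma DD_pos: assumes "\<bar>g\<bar> < 1" shows "DD g t > 0"
proof -
  have "g * cos t \<ge> - \<bar>g\<bar>"
  proof -
    have "\<bar>g * cos t\<bar> \<le> \<bar>g\<bar>" using abs_cos_le_one[of t]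
      by (simp add: abs_mult mult_left_le)
    thus ?thesis by linarith
  qed
  hence "DD g t \<ge> (1 - \<bar>g\<bar>)^2" unfolding DD_def by (simp add: power2_eq_square abs_mult_self_eq algebra_simps)
  moreover have "(1 - \<bar>g\<bar>)^2 > 0" using assms by simp
  ultimately show ?thesis by linarith
qed

lemma cont_sinpow: assumes "p > 0"
  shows "continuous_on (S \<times> {0..pi}) (\<lambda>x::real\<times>real. sin (snd x) powr p)"
  apply (rule continuous_on_powr')
  using assms by (auto intro!: sin_ge_zero continuous_intros)

lemma cont_DDpow:
  shows "continuous_on ({-1<..<1} \<times> T) (\<lambda>x. DD (fst x) (snd x) powr r)"
  apply (rule continuous_on_powr)
  unfolding DD_def apply (auto intro!: continuous_intros)
  subgoal for x y using DD_pos[of x y] unfolding DD_def by (auto simp: abs_less_iff)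
  done

lemma cont_sin1: assumes "p > 0" shows "continuous_on {0..pi} (\<lambda>t. sin t powr p)"
  apply (rule continuous_on_powr')
  using assms by (auto intro!: sin_ge_zero continuous_intros)

lemma cont_DD1: assumes "\<bar>x\<bar> < 1" shows "continuous_on T (\<lambda>t. DD x t powr r)"
  apply (rule continuous_on_powr)
  unfolding DD_def apply (auto intro!: continuous_intros)
  subgoal for t using DD_pos[OF assms, of t] unfolding DD_def by simp
  done

definition Phi :: "real \<Rightarrow> real \<Rightarrow> real" where
  "Phi lam g = integral {0..pi} (\<lambda>t. sin t powr (2*lam) * DD g t powr (-lam))"
definition Kf :: "real \<Rightarrow> real \<Rightarrow> real" where
  "Kf lam g = integral {0..pi} (\<lambda>t. sin t powr (2*lam) * ((1 + g*cos t) * DD g t powr (-lam-1)))"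

lemma DD_deriv: "((\<lambda>g. DD g t) has_real_derivative (2*cos t + 2*g)) (at g)"
  unfolding DD_def by (auto intro!: derivative_eq_intros)

lemma DDpow_deriv: assumes "\<bar>g\<bar> < 1"
  shows "((\<lambda>g. DD g t powr r) has_real_derivative (r * DD g t powr (r - 1) * (2*cos t + 2*g))) (at g)"
  using DERIV_fun_powr[OF DD_deriv[of t g] DD_pos[OF assms, of t], of r] by simp

lemma U_abs: "x \<in> {-1<..<(1::real)} \<Longrightarrow> \<bar>x\<bar> < 1" by auto

lemma Phi_deriv: assumes "lam > 0" "g \<in> {-1<..<1}"
  shows "((Phi lam) has_real_derivative
     integral {0..pi} (\<lambda>t. sin t powr (2*lam) * (-lam * DD g t powr (-lam - 1) * (2*cos t + 2*g)))) (at g)"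
proof -
  have "((\<lambda>x. integral (cbox 0 pi) (\<lambda>t. sin t powr (2*lam) * DD x t powr (-lam))) has_field_derivative
     integral (cbox 0 pi) (\<lambda>t. sin t powr (2*lam) * (-lam * DD g t powr (-lam - 1) * (2*cos t + 2*g)))) (at g within {-1<..<1})"
  proof (rule leibniz_rule_field_derivative)
    fix x t assume x: "x \<in> {-1<..<(1::real)}" and t: "t \<in> cbox 0 pi"
    show "((\<lambda>x. sin t powr (2*lam) * DD x t powr (-lam)) has_field_derivative
        sin t powr (2*lam) * (-lam * DD x t powr (-lam - 1) * (2*cos t + 2*x))) (at x within {-1<..<1})"
      using has_field_derivative_at_within[OF DERIV_cmult[OF DDpow_deriv[OF U_abs[OF x], of t "-lam"], of "sin t powr (2*lam)"]]
      by simp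
  next
    fix x assume x: "x \<in> {-1<..<(1::real)}"
    have "continuous_on {0..pi} (\<lambda>t. sin t powr (2*lam) * DD x t powr (-lam))"
      by (rule continuous_on_mult[OF cont_sin1 cont_DD1]) (use assms x in auto)
    thus "(\<lambda>t. sin t powr (2*lam) * DD x t powr (-lam)) integrable_on cbox 0 pi"
      by (simp add: integrable_continuous_real)
  next
    have "continuous_on ({-1<..<1} \<times> {0..pi}) (\<lambda>x::real\<times>real. sin (snd x) powr (2*lam) * (-lam * DD (fst x) (snd x) powr (-lam - 1) * (2*cos (snd x) + 2*fst x)))"
      apply (rule continuous_on_mult[OF cont_sinpow])
      using assms apply simp
      apply (rule continuous_on_mult)
      apply (rule continuous_on_mult[OF continuous_on_const cont_DDpow])
      apply (intro continuous_intros)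
      done
    thus "continuous_on ({-1<..<1} \<times> cbox 0 pi) (\<lambda>(x, t). sin t powr (2*lam) * (-lam * DD x t powr (-lam - 1) * (2*cos t + 2*x)))"
      by (simp add: split_beta')
  qed (use assms in auto)
  thus ?thesis using assms unfolding Phi_def
    by (simp add: at_within_open[of g "{-1<..<1}"])
qed

definition Kd :: "real \<Rightarrow> real \<Rightarrow> real \<Rightarrow> real" where
  "Kd lam g t = sin t powr (2*lam) * (cos t * DD g t powr (-lam-1) + (1 + g*cos t) * ((-lam-1) * DD g t powr (-lam-1-1) * (2*cos t + 2*g)))"

lemma cont_gen: assumes "p > 0" "\<bar>x\<bar> < 1" "continuous_on {0..pi} f"
  shows "continuous_on {0..pi} (\<lambda>t. sin t powr p * (f t * DD x t powr r))"
  by (rule continuous_on_mult[OF cont_sin1 continuous_on_mult[OF assms(3) cont_DD1]]) (use assms in auto)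

lemma K_deriv: assumes "lam > 0" "g \<in> {-1<..<1}"
  shows "((Kf lam) has_real_derivative integral {0..pi} (Kd lam g)) (at g)"
proof -
  have "((\<lambda>x. integral (cbox 0 pi) (\<lambda>t. sin t powr (2*lam) * ((1 + x*cos t) * DD x t powr (-lam-1)))) has_field_derivative
     integral (cbox 0 pi) (Kd lam g)) (at g within {-1<..<1})"
  proof (rule leibniz_rule_field_derivative)
    fix x t assume x: "x \<in> {-1<..<(1::real)}" and t: "t \<in> cbox 0 pi"
    have "((\<lambda>x. (1 + x*cos t) * DD x t powr (-lam-1)) has_real_derivative
        (cos t * DD x t powr (-lam-1) + (1 + x*cos t) * ((-lam-1) * DD x t powr (-lam-1-1) * (2*cos t + 2*x)))) (at x)"
      by (rule DERIV_cong[OF DERIV_mult[OF _ DDpow_deriv[OF U_abs[OF x], of t "-lam-1"]]])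
        (auto intro!: derivative_eq_intros)
    from has_field_derivative_at_within[OF DERIV_cmult[OF this, of "sin t powr (2*lam)"]]
    show "((\<lambda>x. sin t powr (2*lam) * ((1 + x*cos t) * DD x t powr (-lam-1))) has_field_derivative
        Kd lam x t) (at x within {-1<..<1})"
      unfolding Kd_def by simp
  next
    fix x assume x: "x \<in> {-1<..<(1::real)}"
    have "continuous_on {0..pi} (\<lambda>t. sin t powr (2*lam) * ((1 + x*cos t) * DD x t powr (-lam-1)))"
      by (rule cont_gen) (use assms x in \<open>auto intro!: continuous_intros\<close>)
    thus "(\<lambda>t. sin t powr (2*lam) * ((1 + x*cos t) * DD x t powr (-lam-1))) integrable_on cbox 0 pi"
      by (simp add: integrable_continuous_real)
  next
    have "continuous_on ({-1<..<1} \<times> {0..pi}) (\<lambda>x::real\<times>real. sin (snd x) powr (2*lam) * (cos (snd x) * DD (fst x) (snd x) powr (-lam-1) + (1 + fst x*cos (snd x)) * ((-lam-1) * DD (fst x) (snd x) powr (-lam-1-1) * (2*cos (snd x) + 2*fst x))))"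
      apply (rule continuous_on_mult[OF cont_sinpow])
      using assms apply simp
      apply (rule continuous_on_add)
      apply (rule continuous_on_mult[OF _ cont_DDpow])
      apply (intro continuous_intros)
      apply (rule continuous_on_mult)
      apply (intro continuous_intros)
      apply (rule continuous_on_mult)
      apply (rule continuous_on_mult[OF continuous_on_const cont_DDpow])
      apply (intro continuous_intros)
      done
    thus "continuous_on ({-1<..<1} \<times> cbox 0 pi) (\<lambda>(x, t). Kd lam x t)"
      by (simp add: split_beta' Kd_def)
  qed (use assms in auto)
  thus ?thesis using assms unfolding Kf_def
    by (simp add: at_within_open[of g "{-1<..<1}"])
qed

lemma poly_id: "(sn::real)^2 + cs^2 = 1 \<Longrightarrow> g * (cs*(1+2*g*cs+g^2) + (1+g*cs)*((-lam-1)*(2*cs+2*g))) = -g*((2*lam+1)*cs*(1+2*g*cs+g^2) + sn*((-lam-1)*(-2*g* sn)))"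
  by algebra

lemma Q_int: assumes "lam > 0" "\<bar>g\<bar> < 1"
  shows "integral {0..pi} (\<lambda>t. g * Kd lam g t) = 0"
proof -
  define Q where "Q t = -g * (sin t powr (2*lam+1) * DD g t powr (-lam-1))" for t
  have "((\<lambda>t. g * Kd lam g t) has_integral (Q pi - Q 0)) {0..pi}"
  proof (rule fundamental_theorem_of_calculus_interior)
    show "continuous_on {0..pi} Q" unfolding Q_def
      by (intro continuous_on_mult[OF continuous_on_const] continuous_on_mult[OF cont_sin1 cont_DD1])
        (use assms in auto)
  next
    fix t assume t: "t \<in> {0<..<pi}"
    have s: "sin t > 0" using t by (auto intro!: sin_gt_zero)
    have D: "DD g t > 0" using DD_pos[OF assms(2)] .
    have d1: "((\<lambda>t. sin t powr (2*lam+1)) has_real_derivative (2*lam+1) * sin t powr (2*lam) * cos t) (at t)"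
      using DERIV_fun_powr[OF DERIV_sin s, of "2*lam+1"] by simp
    have dD: "((\<lambda>t. DD g t) has_real_derivative -2*g* sin t) (at t)"
      unfolding DD_def by (auto intro!: derivative_eq_intros)
    have d2: "((\<lambda>t. DD g t powr (-lam-1)) has_real_derivative (-lam-1) * DD g t powr (-lam-1-1) * (-2*g* sin t)) (at t)"
      using DERIV_fun_powr[OF dD D, of "-lam-1"] by simp
    have dQ: "(Q has_real_derivative -g * ((2*lam+1) * sin t powr (2*lam) * cos t * DD g t powr (-lam-1)
       + sin t powr (2*lam+1) * ((-lam-1) * DD g t powr (-lam-1-1) * (-2*g* sin t)))) (at t)"
      unfolding Q_def by (rule DERIV_cong[OF DERIV_cmult[OF DERIV_mult[OF d1 d2]]]) (simp add: algebra_simps)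
    have e1: "sin t powr (2*lam+1) = sin t powr (2*lam) * sin t" using s by (simp add: powr_add)
    have e2: "DD g t powr (-lam-1) = DD g t powr (-lam-1-1) * DD g t" 
    proof -
      have "DD g t powr (-lam-1-1) * DD g t = DD g t powr (-lam-1-1) * DD g t powr 1" using D by simp
      also have "\<dots> = DD g t powr (-lam-1-1+1)" by (simp only: powr_add[symmetric])
      also have "\<dots> = DD g t powr (-lam-1)" by (rule arg_cong[where f="\<lambda>e. DD g t powr e"]) simp
      finally show ?thesis by simp
    qed
    have e3: "sin t ^2 + cos t ^2 = 1" by simp
    have e4: "DD g t = 1+2*g*cos t+g^2" by (simp add: DD_def)
    have "-g * ((2*lam+1) * sin t powr (2*lam) * cos t * DD g t powr (-lam-1)
       + sin t powr (2*lam+1) * ((-lam-1) * DD g t powr (-lam-1-1) * (-2*g* sin t))) = g * Kd lam g t"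
    proof -
      have P: "g * (cos t*(1+2*g*cos t+g^2) + (1+g*cos t)*((-lam-1)*(2*cos t+2*g))) = -g*((2*lam+1)*cos t*(1+2*g*cos t+g^2) + sin t*((-lam-1)*(-2*g* sin t)))"
        using poly_id[OF e3] .
      show ?thesis unfolding Kd_def e1 e2
        using e3 e4 by algebra
    qed
    thus "(Q has_vector_derivative g * Kd lam g t) (at t)"
      using dQ by (simp add: has_real_derivative_iff_has_vector_derivative[symmetric])
  qed simp
  moreover have "Q pi = 0" "Q 0 = 0" unfolding Q_def using assms by simp_all
  ultimately have "((\<lambda>t. g * Kd lam g t) has_integral 0) {0..pi}" by simp
  then show ?thesis by (rule integral_unique)
qed

lemma K_const: assumes "lam > 0" "0 < g" "g < 1"
  shows "Kf lam g = Kf lam 0"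
proof (rule DERIV_isconst2[of 0 g])
  have D: "\<And>x. x \<in> {0..g} \<Longrightarrow> ((Kf lam) has_real_derivative integral {0..pi} (Kd lam x)) (at x)"
    using assms by (intro K_deriv) auto
  show "continuous_on {0..g} (Kf lam)"
    using D by (intro continuous_at_imp_continuous_on ballI DERIV_isCont) auto
  fix x assume x: "0 < x" "x < g"
  have "x * integral {0..pi} (Kd lam x) = 0"
    using Q_int[of lam x] assms x by simp
  hence "integral {0..pi} (Kd lam x) = 0" using x by simp
  thus "((Kf lam) has_real_derivative 0) (at x)" using D[of x] x by simp
qed (use assms in auto)

lemma Phi_K: assumes "lam > 0" "\<bar>x\<bar> < 1"
  shows "x * integral {0..pi} (\<lambda>t. sin t powr (2*lam) * (-lam * DD x t powr (-lam - 1) * (2*cos t + 2*x)))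
     + 2*lam * Phi lam x = 2*lam * Kf lam x"
proof -
  let ?A = "\<lambda>t. sin t powr (2*lam) * (-lam * DD x t powr (-lam - 1) * (2*cos t + 2*x))"
  let ?B = "\<lambda>t. sin t powr (2*lam) * DD x t powr (-lam)"
  let ?K = "\<lambda>t. sin t powr (2*lam) * ((1 + x*cos t) * DD x t powr (-lam-1))"
  have iA: "?A integrable_on {0..pi}"
    by (rule integrable_continuous_real, rule continuous_on_mult[OF cont_sin1], use assms in simp,
        rule continuous_on_mult[OF continuous_on_mult[OF continuous_on_const cont_DD1]], use assms in \<open>auto intro!: continuous_intros\<close>)
  have iB: "?B integrable_on {0..pi}"
    by (rule integrable_continuous_real, rule continuous_on_mult[OF cont_sin1 cont_DD1]) (use assms in auto)
  have pw: "x * ?A t + 2*lam * ?B t = 2*lam * ?K t" for t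
  proof -
    have D: "DD x t > 0" using DD_pos[OF assms(2)] .
    have e2: "DD x t powr (-lam) = DD x t powr (-lam-1) * DD x t"
    proof -
      have "DD x t powr (-lam-1) * DD x t = DD x t powr (-lam-1) * DD x t powr 1" using D by simp
      also have "\<dots> = DD x t powr (-lam-1+1)" by (simp only: powr_add[symmetric])
      also have "\<dots> = DD x t powr (-lam)" by (rule arg_cong[where f="\<lambda>e. DD x t powr e"]) simp
      finally show ?thesis by simp
    qed
    have e4: "DD x t = 1+2*x*cos t+x^2" by (simp add: DD_def)
    show ?thesis unfolding e2 using e4 by algebra
  qed
  have "x * integral {0..pi} ?A + 2*lam * Phi lam x = integral {0..pi} (\<lambda>t. x * ?A t + 2*lam * ?B t)"
    unfolding Phi_def
    using integral_add[OF integrable_on_cmult_left[OF iA, of x] integrable_on_cmult_left[OF iB, of "2*lam"]]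
    by (simp only: integral_mult_right of_real_eq_id id_def)
  also have "\<dots> = integral {0..pi} (\<lambda>t. 2*lam * ?K t)" unfolding pw ..
  also have "\<dots> = 2*lam * Kf lam x" unfolding Kf_def by simp
  finally show ?thesis .
qed

definition C0 :: "real \<Rightarrow> real" where "C0 lam = integral {0..pi} (\<lambda>t. sin t powr (2*lam))"

lemma Phi0: "Phi lam 0 = C0 lam" unfolding Phi_def C0_def DD_def by simp
lemma K0: "Kf lam 0 = C0 lam" unfolding Kf_def C0_def DD_def by simp

lemma Phi_const: assumes "lam > 0" "0 < g" "g < 1"
  shows "Phi lam g = C0 lam"
proof -
  define M where "M x = x powr (2*lam) * (Phi lam x - C0 lam)" for x
  have dM: "(M has_real_derivative 0) (at x)" if x: "0 < x" "x < 1" for x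
  proof -
    let ?P' = "integral {0..pi} (\<lambda>t. sin t powr (2*lam) * (-lam * DD x t powr (-lam - 1) * (2*cos t + 2*x)))"
    have dP: "((Phi lam) has_real_derivative ?P') (at x)" using Phi_deriv[of lam x] assms x by simp
    have dp: "((\<lambda>x. x powr (2*lam)) has_real_derivative 2*lam * x powr (2*lam - 1)) (at x)"
      using has_real_derivative_powr[of x "2*lam"] x by simp
    have "(M has_real_derivative 2*lam * x powr (2*lam - 1) * (Phi lam x - C0 lam) + ?P' * x powr (2*lam)) (at x)"
      unfolding M_def by (rule DERIV_cong[OF DERIV_mult[OF dp DERIV_diff[OF dP DERIV_const]]]) simp
    moreover have "2*lam * x powr (2*lam - 1) * (Phi lam x - C0 lam) + ?P' * x powr (2*lam) = 0"
    proof -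
      have e: "x powr (2*lam) = x powr (2*lam - 1) * x"
      proof -
        have "x powr (2*lam - 1) * x = x powr (2*lam - 1) * x powr 1" using x by simp
        also have "\<dots> = x powr (2*lam - 1 + 1)" by (simp only: powr_add[symmetric])
        finally show ?thesis by simp
      qed
      have k: "Kf lam x = C0 lam" using K_const[of lam x] K0 assms x by simp
      have pk: "x * ?P' + 2*lam * Phi lam x = 2*lam * C0 lam" using Phi_K[of lam x] assms x k by simp
      show ?thesis unfolding e using pk by algebra
    qed
    ultimately show ?thesis by simp
  qed
  have Mc: "M x = M g" if "0 < x" "x \<le> g" for x
  proof (cases "x = g")
    case False
    hence "x < g" using that by simp
    have "M g = M x"
    proof (rule DERIV_isconst2[of x g])
      show "continuous_on {x..g} M" using dM that assms
        by (intro continuous_at_imp_continuous_on ballI DERIV_isCont) (auto intro: dM)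
    qed (use dM that assms \<open>x < g\<close> in auto)
    thus ?thesis by simp
  qed simp
  have lim1: "(M \<longlongrightarrow> M g) (at_right 0)"
  proof (rule tendsto_eventually)
    have "eventually (\<lambda>x. x < g) (at_right (0::real))"
      using assms by (auto simp: eventually_at_right_field intro!: exI[of _ g])
    moreover have "eventually (\<lambda>x. x > 0) (at_right (0::real))" by (simp add: eventually_at_right_less)
    ultimately show "eventually (\<lambda>x. M x = M g) (at_right 0)"
      by eventually_elim (auto intro: Mc)
  qed
  have cP: "isCont (Phi lam) 0" using Phi_deriv[of lam 0] assms by (intro DERIV_isCont) auto
  have lim2: "(M \<longlongrightarrow> 0) (at_right 0)"
  proof -
    have a: "((\<lambda>x. x powr (2*lam)) \<longlongrightarrow> 0) (at_right (0::real))"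
    proof (rule tendsto_zero_powrI[where b="2*lam"])
      show "eventually (\<lambda>x. 0 \<le> x) (at_right (0::real))"
        using eventually_at_right_less[of 0] by (rule eventually_mono) simp
    qed (use assms in \<open>auto intro!: tendsto_intros\<close>)
    have b: "((\<lambda>x. Phi lam x - C0 lam) \<longlongrightarrow> Phi lam 0 - C0 lam) (at_right 0)"
      using cP by (intro tendsto_intros) (simp add: continuous_at filterlim_at_split)
    show ?thesis unfolding M_def using tendsto_mult[OF a b] by simp
  qed
  have "M g = 0" using tendsto_unique[OF _ lim1 lim2] by simp
  thus ?thesis unfolding M_def using assms by simp
qed



lemma cont_DDp: "continuous_on S (\<lambda>x::real\<times>real. DD (fst x) (snd x))"
  unfolding DD_def by (intro continuous_intros)

lemma cont_DDt: "continuous_on S (\<lambda>t. DD x t)"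
  unfolding DD_def by (intro continuous_intros)

lemma DD_nz: "x \<in> {-1<..<1} \<times> T \<Longrightarrow> DD (fst x) (snd x) \<noteq> 0"
  using DD_pos[of "fst x" "snd x"] by (auto simp: abs_less_iff)

lemma DD_ne: "\<bar>g\<bar> < 1 \<Longrightarrow> DD g t \<noteq> 0" using DD_pos[of g t] by linarith

definition Lf :: "real \<Rightarrow> real" where "Lf g = integral {0..pi} (\<lambda>t. ln (DD g t))"
definition Vf :: "real \<Rightarrow> real" where "Vf g = integral {0..pi} (\<lambda>t. g*(g + cos t) / DD g t)"
definition Vd :: "real \<Rightarrow> real \<Rightarrow> real" where
  "Vd g t = ((2*g + cos t) * DD g t - g*(g + cos t) * (2*cos t + 2*g)) / (DD g t)^2"

lemma L_deriv: assumes "g \<in> {-1<..<1}"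
  shows "(Lf has_real_derivative integral {0..pi} (\<lambda>t. (2*cos t + 2*g) / DD g t)) (at g)"
proof -
  have "((\<lambda>x. integral (cbox 0 pi) (\<lambda>t. ln (DD x t))) has_field_derivative
     integral (cbox 0 pi) (\<lambda>t. (2*cos t + 2*g) / DD g t)) (at g within {-1<..<1})"
  proof (rule leibniz_rule_field_derivative)
    fix x t assume x: "x \<in> {-1<..<(1::real)}" and t: "t \<in> cbox 0 pi"
    have "DD x t > 0" using DD_pos[OF U_abs[OF x]] .
    hence "((\<lambda>x. ln (DD x t)) has_real_derivative (1 / DD x t) * (2*cos t + 2*x)) (at x)"
      by (intro DERIV_chain2[OF DERIV_ln_divide DD_deriv])
    hence "((\<lambda>x. ln (DD x t)) has_real_derivative (2*cos t + 2*x) / DD x t) (at x)"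
      by (rule DERIV_cong) simp
    thus "((\<lambda>x. ln (DD x t)) has_field_derivative (2*cos t + 2*x) / DD x t) (at x within {-1<..<1})"
      by (rule has_field_derivative_at_within)
  next
    fix x assume x: "x \<in> {-1<..<(1::real)}"
    have "continuous_on {0..pi} (\<lambda>t. ln (DD x t))"
      by (rule continuous_on_ln[OF cont_DDt]) (use DD_ne[OF U_abs[OF x]] in auto)
    thus "(\<lambda>t. ln (DD x t)) integrable_on cbox 0 pi"
      by (simp add: integrable_continuous_real)
  next
    have "continuous_on ({-1<..<1} \<times> {0..pi}) (\<lambda>x::real\<times>real. (2*cos (snd x) + 2*fst x) / DD (fst x) (snd x))"
      by (rule continuous_on_divide[OF _ cont_DDp], intro continuous_intros) (rule ballI, rule DD_nz)
    thus "continuous_on ({-1<..<1} \<times> cbox 0 pi) (\<lambda>(x, t). (2*cos t + 2*x) / DD x t)"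
      by (simp add: split_beta')
  qed (use assms in auto)
  thus ?thesis using assms unfolding Lf_def
    by (simp add: at_within_open[of g "{-1<..<1}"])
qed

lemma V_deriv: assumes "g \<in> {-1<..<1}"
  shows "(Vf has_real_derivative integral {0..pi} (Vd g)) (at g)"
proof -
  have "((\<lambda>x. integral (cbox 0 pi) (\<lambda>t. x*(x + cos t) / DD x t)) has_field_derivative
     integral (cbox 0 pi) (Vd g)) (at g within {-1<..<1})"
  proof (rule leibniz_rule_field_derivative)
    fix x t assume x: "x \<in> {-1<..<(1::real)}" and t: "t \<in> cbox 0 pi"
    have "DD x t > 0" using DD_pos[OF U_abs[OF x]] .
    hence ne: "DD x t \<noteq> 0" by simp
    have dn: "((\<lambda>x. x*(x + cos t)) has_real_derivative 2*x + cos t) (at x)"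
      by (rule DERIV_cong, rule DERIV_mult[OF DERIV_ident DERIV_add[OF DERIV_ident DERIV_const]]) simp
    have "((\<lambda>x. x*(x + cos t) / DD x t) has_real_derivative Vd x t) (at x)"
      unfolding Vd_def
      by (rule DERIV_cong[OF DERIV_divide[OF dn DD_deriv ne]]) (simp add: power2_eq_square)
    thus "((\<lambda>x. x*(x + cos t) / DD x t) has_field_derivative Vd x t) (at x within {-1<..<1})"
      by (rule has_field_derivative_at_within)
  next
    fix x assume x: "x \<in> {-1<..<(1::real)}"
    have "continuous_on {0..pi} (\<lambda>t. x*(x + cos t) / DD x t)"
      by (rule continuous_on_divide[OF _ cont_DDt], intro continuous_intros) (use DD_ne[OF U_abs[OF x]] in auto)
    thus "(\<lambda>t. x*(x + cos t) / DD x t) integrable_on cbox 0 pi"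
      by (simp add: integrable_continuous_real)
  next
    have "continuous_on ({-1<..<1} \<times> {0..pi}) (\<lambda>x::real\<times>real. Vd (fst x) (snd x))"
      unfolding Vd_def
      by (rule continuous_on_divide, intro continuous_intros cont_DDp, intro continuous_on_power cont_DDp) (use DD_nz in auto)
    thus "continuous_on ({-1<..<1} \<times> cbox 0 pi) (\<lambda>(x, t). Vd x t)"
      by (simp add: split_beta')
  qed (use assms in auto)
  thus ?thesis using assms unfolding Vf_def
    by (simp add: at_within_open[of g "{-1<..<1}"])
qed

lemma V_int: assumes "\<bar>g\<bar> < 1"
  shows "integral {0..pi} (\<lambda>t. g * Vd g t) = 0"
proof -
  define Q where "Q t = g * sin t / DD g t" for t
  have "((\<lambda>t. g * Vd g t) has_integral (Q pi - Q 0)) {0..pi}"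
  proof (rule fundamental_theorem_of_calculus_interior)
    show "continuous_on {0..pi} Q" unfolding Q_def
      by (rule continuous_on_divide[OF _ cont_DDt], intro continuous_intros) (use DD_ne[OF assms] in auto)
  next
    fix t assume t: "t \<in> {0<..<pi}"
    have D: "DD g t > 0" using DD_pos[OF assms] .
    have dD: "((\<lambda>t. DD g t) has_real_derivative -2*g* sin t) (at t)"
      unfolding DD_def by (auto intro!: derivative_eq_intros)
    have dn: "((\<lambda>t. g * sin t) has_real_derivative g * cos t) (at t)"
      by (rule DERIV_cmult[OF DERIV_sin])
    have dQ: "(Q has_real_derivative ((g * cos t) * DD g t - (-2*g* sin t) * (g * sin t)) / (DD g t)^2) (at t)"
      unfolding Q_def using D
      by (intro DERIV_cong[OF DERIV_divide[OF dn dD]]) (simp_all add: power2_eq_square)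
    have e3: "sin t ^2 + cos t ^2 = 1" by simp
    have e4: "DD g t = 1+2*g*cos t+g^2" by (simp add: DD_def)
    have "((g * cos t) * DD g t - (-2*g* sin t) * (g * sin t)) / (DD g t)^2 = g * Vd g t"
      unfolding Vd_def
    proof -
      have "(g * cos t) * DD g t - (-2*g* sin t) * (g * sin t) = g * ((2*g + cos t) * DD g t - g*(g + cos t) * (2*cos t + 2*g))"
        using e3 e4 by algebra
      thus "((g * cos t) * DD g t - (-2*g* sin t) * (g * sin t)) / (DD g t)^2 =
         g * (((2*g + cos t) * DD g t - g*(g + cos t) * (2*cos t + 2*g)) / (DD g t)^2)" by simp
    qed
    thus "(Q has_vector_derivative g * Vd g t) (at t)"
      using dQ by (simp add: has_real_derivative_iff_has_vector_derivative[symmetric])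
  qed simp
  moreover have "Q pi = 0" "Q 0 = 0" unfolding Q_def by simp_all
  ultimately have "((\<lambda>t. g * Vd g t) has_integral 0) {0..pi}" by simp
  then show ?thesis by (rule integral_unique)
qed

lemma V_const: assumes "0 < g" "g < 1" shows "Vf g = 0"
proof -
  have "Vf g = Vf 0"
  proof (rule DERIV_isconst2[of 0 g])
    have D: "\<And>x. x \<in> {0..g} \<Longrightarrow> (Vf has_real_derivative integral {0..pi} (Vd x)) (at x)"
      using assms by (intro V_deriv) auto
    show "continuous_on {0..g} Vf"
      using D by (intro continuous_at_imp_continuous_on ballI DERIV_isCont) auto
    fix x assume x: "0 < x" "x < g"
    have "x * integral {0..pi} (Vd x) = 0"
      using V_int[of x] assms x by simp
    hence "integral {0..pi} (Vd x) = 0" using x by simp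
    thus "(Vf has_real_derivative 0) (at x)" using D[of x] x by simp
  qed (use assms in auto)
  thus ?thesis unfolding Vf_def by simp
qed

lemma L_zero: assumes "0 < g" "g < 1" shows "Lf g = 0"
proof -
  have "Lf g = Lf 0"
  proof (rule DERIV_isconst2[of 0 g])
    have D: "\<And>x. x \<in> {0..g} \<Longrightarrow> (Lf has_real_derivative integral {0..pi} (\<lambda>t. (2*cos t + 2*x) / DD x t)) (at x)"
      using assms by (intro L_deriv) auto
    show "continuous_on {0..g} Lf"
      using D by (intro continuous_at_imp_continuous_on ballI DERIV_isCont) auto
    fix x assume x: "0 < x" "x < g"
    have "Vf x = 0" using V_const[of x] x assms by simp
    moreover have "(\<lambda>t. x*(x + cos t) / DD x t) = (\<lambda>t. x * ((x + cos t) / DD x t))" by simp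
    ultimately have "x * integral {0..pi} (\<lambda>t. (x + cos t) / DD x t) = 0"
      unfolding Vf_def by (simp only: integral_mult_right)
    hence "integral {0..pi} (\<lambda>t. (x + cos t) / DD x t) = 0" using x by simp
    hence "2 * integral {0..pi} (\<lambda>t. (x + cos t) / DD x t) = 0" by simp
    hence "integral {0..pi} (\<lambda>t. 2 * ((x + cos t) / DD x t)) = 0" by (simp only: integral_mult_right)
    moreover have "(\<lambda>t. 2 * ((x + cos t) / DD x t)) = (\<lambda>t. (2*cos t + 2*x) / DD x t)" by (simp add: algebra_simps)
    ultimately have "integral {0..pi} (\<lambda>t. (2*cos t + 2*x) / DD x t) = 0" by (simp only:)
    thus "(Lf has_real_derivative 0) (at x)" using D[of x] x by simp
  qed (use assms in auto)
  thus ?thesis unfolding Lf_def DD_def by simp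
qed



lemma cos_range: "0 < t \<Longrightarrow> t < pi \<Longrightarrow> -2 < -2 * cos t \<and> -2 * cos t < 2"
proof -
  assume t: "0 < t" "t < pi"
  have "cos t < 1" using t cos_monotone_0_pi[of 0 t] by simp
  moreover have "cos t > -1" using t cos_monotone_0_pi[of t pi] by simp
  ultimately show ?thesis by simp
qed

lemma subst_lemma:
  fixes f h :: "real \<Rightarrow> real"
  assumes fm: "f \<in> borel_measurable borel"
   and fc: "\<And>x. -2 < x \<Longrightarrow> x < 2 \<Longrightarrow> isCont f x"
   and hc: "continuous_on {0..pi} h"
   and hf: "\<And>t. 0 < t \<Longrightarrow> t < pi \<Longrightarrow> f (-2*cos t) * (2* sin t) = h t"
  shows "(LBINT x=-2..2. f x) = integral {0..pi} h"
proof -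
  let ?g = "\<lambda>t::real. -2*cos t" and ?g' = "\<lambda>t::real. 2* sin t"
  have ei: "einterval (ereal 0) (ereal pi) = {0<..<pi}" by simp
  have hI: "set_integrable lborel {0..pi} h" by (rule borel_integrable_atLeastAtMost'[OF hc])
  have hI': "set_integrable lborel {0<..<pi} h"
    by (rule set_integrable_subset[OF hI]) auto
  have haI: "set_integrable lborel {0<..<pi} (\<lambda>t. \<bar>h t\<bar>)"
    by (rule set_integrable_abs[OF hI'])
  have dg: "DERIV ?g x :> ?g' x" for x
    by (auto intro!: derivative_eq_intros)
  have A: "((ereal \<circ> ?g \<circ> real_of_ereal) \<longlongrightarrow> ereal (-2)) (at_right (ereal 0))"
    unfolding ereal_tendsto_simps
    by (auto intro!: tendsto_eq_intros)
  have B: "((ereal \<circ> ?g \<circ> real_of_ereal) \<longlongrightarrow> ereal 2) (at_left (ereal pi))"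
    unfolding ereal_tendsto_simps
    by (auto intro!: tendsto_eq_intros)
  have absI: "set_integrable lborel (einterval (ereal (-2)) (ereal 2)) (\<lambda>x. \<bar>f x\<bar>)"
  proof (rule interval_integral_substitution_nonneg(1)[of "ereal 0" "ereal pi" ?g ?g' "\<lambda>x. \<bar>f x\<bar>"])
    show "set_integrable lborel (einterval (ereal 0) (ereal pi)) (\<lambda>x. \<bar>f (?g x)\<bar> * ?g' x)"
      unfolding ei
    proof (subst set_integrable_cong[OF refl refl])
      fix t assume t: "t \<in> {0<..<pi}"
      have "sin t > 0" using t by (auto intro!: sin_gt_zero)
      moreover have "h t = f (?g t) * ?g' t" using hf[of t] t by simp
      ultimately show "\<bar>f (?g t)\<bar> * ?g' t = \<bar>h t\<bar>" by (simp add: abs_mult)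
    qed (rule haI)
  next
    fix x assume "ereal 0 < ereal x" "ereal x < ereal pi"
    hence x: "0 < x" "x < pi" by auto
    show "isCont (\<lambda>x. \<bar>f x\<bar>) (?g x)" using fc cos_range[OF x] by (auto intro!: continuous_intros)
  next
    fix x assume "ereal 0 \<le> ereal x" "ereal x \<le> ereal pi"
    hence x: "0 \<le> x" "x \<le> pi" by auto
    show "0 \<le> ?g' x" using sin_ge_zero[OF x] by simp
  qed (use dg A B in \<open>auto intro!: continuous_intros\<close>)
  have fI: "set_integrable lborel (einterval (ereal (-2)) (ereal 2)) f"
    using absI set_integrable_abs_iff'[of f lborel] fm by simp
  have "(LBINT x=ereal (-2)..ereal 2. f x) = (LBINT x=ereal 0..ereal pi. ?g' x *\<^sub>R f (?g x))"
  proof (rule interval_integral_substitution_integrable)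
    show "set_integrable lborel (einterval (ereal 0) (ereal pi)) (\<lambda>x. ?g' x *\<^sub>R f (?g x))"
      unfolding ei
    proof (subst set_integrable_cong[OF refl refl])
      fix t assume t: "t \<in> {0<..<pi}"
      thus "?g' t *\<^sub>R f (?g t) = h t" using hf[of t] t by (auto simp: mult.commute)
    qed (rule hI')
  next
    fix x assume "ereal 0 < ereal x" "ereal x < ereal pi"
    hence x: "0 < x" "x < pi" by auto
    show "isCont f (?g x)" using fc cos_range[OF x] by auto
  next
    fix x assume "ereal 0 \<le> ereal x" "ereal x \<le> ereal pi"
    hence x: "0 \<le> x" "x \<le> pi" by auto
    show "0 \<le> ?g' x" using sin_ge_zero[OF x] by simp
  qed (use dg A B fI in \<open>auto intro!: continuous_intros\<close>)
  also have "\<dots> = (LBINT x=ereal 0..ereal pi. h x)"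
    by (rule interval_integral_cong) (use hf in \<open>auto simp: mult.commute\<close>)
  also have "\<dots> = integral {0..pi} h"
    using interval_integral_eq_integral[of 0 pi h] hI by simp
  finally show ?thesis by simp
qed



lemma G_facts: assumes "z > 2" shows "0 < G z" "G z < 1" "z = G z + 1 / G z"
proof -
  define r where "r = sqrt (z^2 - 4)"
  have z4: "z^2 \<ge> 4"
  proof -
    have "2*2 \<le> z*z" using assms by (intro mult_mono) auto
    thus ?thesis by (simp add: power2_eq_square)
  qed
  have r0: "r \<ge> 0" and r2: "r^2 = z^2 - 4" using z4 unfolding r_def by simp_all
  have rz: "r < z"
  proof -
    have "r < sqrt (z^2)" unfolding r_def by (rule real_sqrt_less_mono) simp
    thus ?thesis using assms by simp
  qed
  have rz2: "z - 2 < r"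
  proof -
    have "(z-2)^2 < z^2 - 4" using assms by (simp add: power2_eq_square algebra_simps)
    hence "sqrt ((z-2)^2) < r" unfolding r_def by (rule real_sqrt_less_mono)
    thus ?thesis using assms by simp
  qed
  have g: "G z = (z - r)/2" unfolding G_def r_def ..
  show "0 < G z" using g rz by simp
  show "G z < 1" using g rz2 by simp
  have zr: "(z - r) * (z + r) = 4" using r2 by (simp add: power2_eq_square algebra_simps)
  have "G z * (z - G z) = 1" unfolding g using zr by (simp add: field_simps)
  thus "z = G z + 1 / G z" using \<open>0 < G z\<close> by (simp add: field_simps)
qed

lemma zcos: assumes "0 < g" "z = g + 1/g" shows "z + 2*cos t = DD g t / g"
  using assms unfolding DD_def by (simp add: field_simps power2_eq_square)

lemma sin_pos: "0 < t \<Longrightarrow> t < pi \<Longrightarrow> 0 < sin t" by (rule sin_gt_zero)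

lemma four_cos: "4 - (-2*cos (t::real))^2 = (2* sin t)^2"
  by (simp add: power_mult_distrib sin_squared_eq algebra_simps)

lemma int_sin2: "integral {0..pi} (\<lambda>t. sin t powr (2*1)) = pi/2"
proof -
  have eq: "integral {0..pi} (\<lambda>t. sin t powr (2*1)) = integral {0..pi} (\<lambda>t. (sin t)^2)"
  proof (rule integral_cong)
    fix t assume t: "t \<in> {0..pi}"
    have "sin t \<ge> 0" using t by (auto intro!: sin_ge_zero)
    thus "sin t powr (2*1) = (sin t)^2"
    proof (cases "sin t = 0")
      case False
      hence "sin t > 0" using \<open>sin t \<ge> 0\<close> by simp
      thus ?thesis using powr_realpow[of "sin t" 2] by simp
    qed simp
  qed
  have "((\<lambda>t. (sin t)^2) has_integral ((\<lambda>t. (t - sin t * cos t)/2) pi - (\<lambda>t. (t - sin t * cos t)/2) 0)) {0..pi}"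
  proof (rule fundamental_theorem_of_calculus)
    fix t assume "t \<in> {0..pi}"
    have "((\<lambda>t. (t - sin t * cos t)/2) has_real_derivative (1 - (cos t * cos t - sin t * sin t))/2) (at t)"
      by (auto intro!: derivative_eq_intros)
    moreover have "(1 - (cos t * cos t - sin t * sin t))/2 = (sin t)^2"
      using sin_cos_squared_add[of t] by (simp add: power2_eq_square algebra_simps)
    ultimately show "((\<lambda>t. (t - sin t * cos t)/2) has_vector_derivative (sin t)^2) (at t within {0..pi})"
      by (simp add: has_real_derivative_iff_has_vector_derivative[symmetric] has_field_derivative_at_within)
  qed simp
  hence "integral {0..pi} (\<lambda>t. (sin t)^2) = pi/2" by (simp add: integral_unique)
  thus ?thesis using eq by simp
qed

lemma four_pos: "-2 < (x::real) \<Longrightarrow> x < 2 \<Longrightarrow> 4 - x^2 > 0"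
proof -
  assume x: "-2 < x" "x < 2"
  have "4 - x^2 = (2-x)*(2+x)" by (simp add: power2_eq_square algebra_simps)
  moreover have "(2-x)*(2+x) > 0" using x by (intro mult_pos_pos) auto
  ultimately show ?thesis by simp
qed

lemma part1: assumes lam: "lam > 0" and g: "0 < g" "g < 1" and z: "z = g + 1/g"
  shows "(LBINT x = -2..2. (4 - x^2) powr (lam - 1/2) / (z - x) powr lam)
      = 2 powr (2*lam) * g powr lam * C0 lam"
proof -
  have ga: "\<bar>g\<bar> < 1" using g by simp
  have z2: "z > 2"
  proof -
    have "(g - 1)^2 > 0" using g by simp
    hence "g^2 + 1 > 2*g" by (simp add: power2_eq_square algebra_simps)
    hence "(g^2 + 1)/g > 2" using g by (simp add: field_simps)
    thus ?thesis unfolding z using g by (simp add: field_simps power2_eq_square)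
  qed
  let ?h = "\<lambda>t. 2 powr (2*lam) * g powr lam * (sin t powr (2*lam) * DD g t powr (-lam))"
  have "(LBINT x = -2..2. (4 - x^2) powr (lam - 1/2) / (z - x) powr lam) = integral {0..pi} ?h"
  proof (rule subst_lemma)
    show "(\<lambda>x. (4 - x^2) powr (lam - 1/2) / (z - x) powr lam) \<in> borel_measurable borel" by measurable
  next
    fix x :: real assume x: "-2 < x" "x < 2"
    have "4 - x^2 > 0" using four_pos[OF x] .
    moreover have "z - x > 0" using x z2 by simp
    ultimately show "isCont (\<lambda>x. (4 - x^2) powr (lam - 1/2) / (z - x) powr lam) x"
      by (auto intro!: continuous_intros)
  next
    show "continuous_on {0..pi} ?h"
      by (intro continuous_on_mult[OF continuous_on_const] continuous_on_mult[OF cont_sin1 cont_DD1])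
        (use lam ga in auto)
  next
    fix t :: real assume t: "0 < t" "t < pi"
    have s: "sin t > 0" using t by (rule sin_pos)
    have D: "DD g t > 0" using DD_pos[OF ga] .
    have e1: "(4 - (-2*cos t)^2) powr (lam - 1/2) = (2* sin t) powr (2*lam - 1)"
    proof -
      have q: "(2* sin t)^2 = (2* sin t) powr 2" using powr_realpow[of "2* sin t" 2] s by simp
      have "(4 - (-2*cos t)^2) powr (lam - 1/2) = (2* sin t) powr (2 * (lam - 1/2))"
        unfolding four_cos q powr_powr ..
      also have "2 * (lam - 1/2) = 2*lam - 1" by (simp add: algebra_simps)
      finally show ?thesis .
    qed
    have e2: "(2* sin t) powr (2*lam - 1) * (2* sin t) = 2 powr (2*lam) * sin t powr (2*lam)"
    proof -
      have "(2* sin t) powr (2*lam - 1) * (2* sin t) = (2* sin t) powr (2*lam - 1) * (2* sin t) powr 1" using s by simp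
      also have "\<dots> = (2* sin t) powr (2*lam - 1 + 1)" by (simp only: powr_add[symmetric])
      also have "\<dots> = (2* sin t) powr (2*lam)" by simp
      also have "\<dots> = 2 powr (2*lam) * sin t powr (2*lam)" using s by (simp add: powr_mult)
      finally show ?thesis .
    qed
    have e3: "(z - -2*cos t) powr lam = DD g t powr lam / g powr lam"
      using zcos[OF g(1) z, of t] D g by (simp add: powr_divide)
    have e4: "DD g t powr (-lam) = 1 / DD g t powr lam" using D by (simp add: powr_minus divide_inverse)
    show "(4 - (-2*cos t)^2) powr (lam - 1/2) / (z - -2*cos t) powr lam * (2* sin t) = ?h t"
      unfolding e1 e3 e4 using e2 D g by (simp add: field_simps)
  qed
  also have "\<dots> = 2 powr (2*lam) * g powr lam * Phi lam g"
    unfolding Phi_def by simp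
  also have "\<dots> = 2 powr (2*lam) * g powr lam * C0 lam"
    using Phi_const[OF lam g] by simp
  finally show ?thesis .
qed

lemma partC: assumes lam: "lam > 0"
  shows "C lam = 2 powr (2*lam) * C0 lam"
proof -
  let ?h = "\<lambda>t. 2 powr (2*lam) * sin t powr (2*lam)"
  have "C lam = integral {0..pi} ?h" unfolding C_def
  proof (rule subst_lemma)
    show "(\<lambda>x. (4 - x^2) powr (lam - 1/2)) \<in> borel_measurable borel" by measurable
  next
    fix x :: real assume x: "-2 < x" "x < 2"
    have "4 - x^2 > 0" using four_pos[OF x] .
    thus "isCont (\<lambda>x. (4 - x^2) powr (lam - 1/2)) x"
      by (auto intro!: continuous_intros)
  next
    show "continuous_on {0..pi} ?h"
      by (intro continuous_on_mult[OF continuous_on_const] cont_sin1) (use lam in auto)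
  next
    fix t :: real assume t: "0 < t" "t < pi"
    have s: "sin t > 0" using t by (rule sin_pos)
    have e1: "(4 - (-2*cos t)^2) powr (lam - 1/2) = (2* sin t) powr (2*lam - 1)"
    proof -
      have q: "(2* sin t)^2 = (2* sin t) powr 2" using powr_realpow[of "2* sin t" 2] s by simp
      have "(4 - (-2*cos t)^2) powr (lam - 1/2) = (2* sin t) powr (2 * (lam - 1/2))"
        unfolding four_cos q powr_powr ..
      also have "2 * (lam - 1/2) = 2*lam - 1" by (simp add: algebra_simps)
      finally show ?thesis .
    qed
    have e2: "(2* sin t) powr (2*lam - 1) * (2* sin t) = 2 powr (2*lam) * sin t powr (2*lam)"
    proof -
      have "(2* sin t) powr (2*lam - 1) * (2* sin t) = (2* sin t) powr (2*lam - 1) * (2* sin t) powr 1" using s by simp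
      also have "\<dots> = (2* sin t) powr (2*lam - 1 + 1)" by (simp only: powr_add[symmetric])
      also have "\<dots> = (2* sin t) powr (2*lam)" by simp
      also have "\<dots> = 2 powr (2*lam) * sin t powr (2*lam)" using s by (simp add: powr_mult)
      finally show ?thesis .
    qed
    show "(4 - (-2*cos t)^2) powr (lam - 1/2) * (2* sin t) = ?h t"
      unfolding e1 using e2 by simp
  qed
  also have "\<dots> = 2 powr (2*lam) * C0 lam" unfolding C0_def by simp
  finally show ?thesis .
qed

lemma part2: assumes g: "0 < g" "g < 1" and z: "z = g + 1/g"
  shows "(LBINT x = -2..2. (1 / (z - x)) * (sqrt (4 - x^2) / (2 * pi))) = g"
proof -
  have ga: "\<bar>g\<bar> < 1" using g by simp
  have z2: "z > 2"
  proof -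
    have "(g - 1)^2 > 0" using g by simp
    hence "g^2 + 1 > 2*g" by (simp add: power2_eq_square algebra_simps)
    hence "(g^2 + 1)/g > 2" using g by (simp add: field_simps)
    thus ?thesis unfolding z using g by (simp add: field_simps power2_eq_square)
  qed
  let ?h = "\<lambda>t. (2/pi) * g * (sin t powr (2*1) * DD g t powr (-1))"
  have "(LBINT x = -2..2. (1 / (z - x)) * (sqrt (4 - x^2) / (2 * pi))) = integral {0..pi} ?h"
  proof (rule subst_lemma)
    show "(\<lambda>x. (1 / (z - x)) * (sqrt (4 - x^2) / (2 * pi))) \<in> borel_measurable borel" by measurable
  next
    fix x :: real assume x: "-2 < x" "x < 2"
    have "z - x > 0" using x z2 by simp
    thus "isCont (\<lambda>x. (1 / (z - x)) * (sqrt (4 - x^2) / (2 * pi))) x"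
      by (auto intro!: continuous_intros)
  next
    show "continuous_on {0..pi} ?h"
      by (intro continuous_on_mult[OF continuous_on_const] continuous_on_mult[OF cont_sin1 cont_DD1])
        (use ga in auto)
  next
    fix t :: real assume t: "0 < t" "t < pi"
    have s: "sin t > 0" using t by (rule sin_pos)
    have D: "DD g t > 0" using DD_pos[OF ga] .
    have e1: "sqrt (4 - (-2*cos t)^2) = 2 * sin t" unfolding four_cos real_sqrt_abs using s by simp
    have e3: "z - -2*cos t = DD g t / g" using zcos[OF g(1) z, of t] by simp
    have e4: "DD g t powr (-1) = 1 / DD g t" using D by (simp add: powr_minus divide_inverse)
    have e5: "sin t powr (2*1) = (sin t)^2" using s powr_realpow[of "sin t" 2] by simp
    show "(1 / (z - -2*cos t)) * (sqrt (4 - (-2*cos t)^2) / (2 * pi)) * (2* sin t) = ?h t"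
      unfolding e1 e3 e4 e5 using D g by (simp add: field_simps power2_eq_square)
  qed
  also have "\<dots> = (2/pi) * g * Phi 1 g"
    unfolding Phi_def by (simp only: integral_mult_right)
  also have "\<dots> = (2/pi) * g * C0 1"
    using Phi_const[of 1 g] g by simp
  also have "\<dots> = g"
  proof -
    have "C0 1 = pi/2" unfolding C0_def using int_sin2 by simp
    thus ?thesis by (simp add: field_simps)
  qed
  finally show ?thesis .
qed

lemma part3: assumes g: "0 < g" "g < 1" and z: "z = g + 1/g"
  shows "(LBINT x = -2..2. ln (z - x) / (pi * sqrt (4 - x^2))) = - ln g"
proof -
  have ga: "\<bar>g\<bar> < 1" using g by simp
  have z2: "z > 2"
  proof -
    have "(g - 1)^2 > 0" using g by simp
    hence "g^2 + 1 > 2*g" by (simp add: power2_eq_square algebra_simps)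
    hence "(g^2 + 1)/g > 2" using g by (simp add: field_simps)
    thus ?thesis unfolding z using g by (simp add: field_simps power2_eq_square)
  qed
  let ?h = "\<lambda>t. ln (DD g t) / pi - ln g / pi"
  have cl: "continuous_on {0..pi} (\<lambda>t. ln (DD g t))"
    by (rule continuous_on_ln[OF cont_DDt]) (use DD_ne[OF ga] in auto)
  have "(LBINT x = -2..2. ln (z - x) / (pi * sqrt (4 - x^2))) = integral {0..pi} ?h"
  proof (rule subst_lemma)
    show "(\<lambda>x. ln (z - x) / (pi * sqrt (4 - x^2))) \<in> borel_measurable borel" by measurable
  next
    fix x :: real assume x: "-2 < x" "x < 2"
    have "z - x > 0" using x z2 by simp
    moreover have "4 - x^2 > 0" using four_pos[OF x] .
    ultimately show "isCont (\<lambda>x. ln (z - x) / (pi * sqrt (4 - x^2))) x"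
      by (auto intro!: continuous_intros)
  next
    show "continuous_on {0..pi} ?h"
      by (intro continuous_on_diff continuous_on_divide cl continuous_on_const) auto
  next
    fix t :: real assume t: "0 < t" "t < pi"
    have s: "sin t > 0" using t by (rule sin_pos)
    have D: "DD g t > 0" using DD_pos[OF ga] .
    have e1: "sqrt (4 - (-2*cos t)^2) = 2 * sin t" unfolding four_cos real_sqrt_abs using s by simp
    have e3: "z - -2*cos t = DD g t / g" using zcos[OF g(1) z, of t] by simp
    have e4: "ln (DD g t / g) = ln (DD g t) - ln g" using D g by (simp add: ln_div)
    show "ln (z - -2*cos t) / (pi * sqrt (4 - (-2*cos t)^2)) * (2* sin t) = ?h t"
      unfolding e1 e3 e4 using s by (simp add: field_simps)
  qed
  also have "\<dots> = integral {0..pi} (\<lambda>t. ln (DD g t) / pi) - integral {0..pi} (\<lambda>t. ln g / pi)"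
    by (rule integral_diff) (auto intro!: integrable_continuous_real continuous_on_divide cl)
  also have "\<dots> = Lf g / pi - ln g"
    unfolding Lf_def by simp
  also have "\<dots> = - ln g" using L_zero[OF g] by simp
  finally show ?thesis .
qed

theorem mainTheorem1:
  fixes lam z :: real
  assumes "lam > 0" and "z > 2"
  shows "(LBINT x = -2..2. (4 - x^2) powr (lam - 1/2) / (z - x) powr lam) = C lam * (G z) powr lam
       \<and> C lam * (G z) powr lam
           = C lam * (LBINT x = -2..2. (1 / (z - x)) * (sqrt (4 - x^2) / (2 * pi))) powr lam
       \<and> C lam * (LBINT x = -2..2. (1 / (z - x)) * (sqrt (4 - x^2) / (2 * pi))) powr lam
           = C lam * exp (- lam * (LBINT x = -2..2. ln (z - x) / (pi * sqrt (4 - x^2))))"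
proof -
  note gf = G_facts[OF assms(2)]
  have p1: "(LBINT x = -2..2. (4 - x^2) powr (lam - 1/2) / (z - x) powr lam) = C lam * (G z) powr lam"
    using part1[OF assms(1) gf(1,2) gf(3)] partC[OF assms(1)] by simp
  have p2: "(LBINT x = -2..2. (1 / (z - x)) * (sqrt (4 - x^2) / (2 * pi))) = G z"
    using part2[OF gf(1,2) gf(3)] .
  have p3: "exp (- lam * (LBINT x = -2..2. ln (z - x) / (pi * sqrt (4 - x^2)))) = G z powr lam"
    using part3[OF gf(1,2) gf(3)] gf(1) by (simp add: powr_def)
  show ?thesis using p1 p2 p3 by simp
qed


end
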